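(* Let $(X,d)$ be a metric space such that $d(v,v')<\pi/2$ for all $v,v'\in X$, let $T\colon X\to X$ be a vicinal mapping, let $p\in X$, and let $\{x_n\}$ be a sequence in $X$ such that $\mathrm{AC}(\{x_n\})=\{p\}$ and $d(Tx_n,x_n)\to 0$. Then $Tp=p$.
   Context: The asymptotic center of $\{x_n\}$ is $\mathrm{AC}(\{x_n\})=\{z\in X:\limsup_n d(x_n,z)=\inf_{y\in X}\limsup_n d(x_n,y)\}$. With $C_z=\cos d(Tz,z)$, $T$ is vicinal if for all $x,y\in X$: $\bigl(C_x^2(1+C_y^2)+C_y^2(1+C_x^2)\bigr)\cos d(Tx,Ty)\ge C_x^2(1+C_y^2)\cos d(Tx,y)+C_y^2(1+C_x^2)\cos d(Ty,x)$. *)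

theory Defs
  imports "HOL-Analysis.Analysis"
begin

(* The metric space X is the whole type 'a (class metric_space), d = dist. *)

definition asymptotic_radius_at :: "(nat \<Rightarrow> 'a::metric_space) \<Rightarrow> 'a \<Rightarrow> ereal" where
  "asymptotic_radius_at x z = limsup (\<lambda>n. ereal (dist (x n) z))"

definition asymptotic_center :: "(nat \<Rightarrow> 'a::metric_space) \<Rightarrow> 'a set" where
  "asymptotic_center x =
     {z. asymptotic_radius_at x z = (INF y. asymptotic_radius_at x y)}"

definition vicinal :: "('a::metric_space \<Rightarrow> 'a) \<Rightarrow> bool" where
  "vicinal T \<longleftrightarrow> (\<forall>x y.
     let Cx = cos (dist (T x) x); Cy = cos (dist (T y) y) in
     (Cx^2 * (1 + Cy^2) + Cy^2 * (1 + Cx^2)) * cos (dist (T x) (T y))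
       \<ge> Cx^2 * (1 + Cy^2) * cos (dist (T x) y) + Cy^2 * (1 + Cx^2) * cos (dist (T y) x))"

end

theory Submission
  imports Defs
begin

lemma cos_lip: "\<bar>cos (a::real) - cos b\<bar> \<le> \<bar>a - b\<bar>"
proof -
  have "\<bar>cos a - cos b\<bar> = 2 * \<bar>sin ((a + b) / 2)\<bar> * \<bar>sin ((b - a) / 2)\<bar>"
    by (simp add: cos_diff_cos abs_mult)
  also have "\<dots> \<le> 2 * 1 * \<bar>(b - a) / 2\<bar>"
    by (intro mult_mono abs_sin_x_le_abs_x) auto
  finally show ?thesis by simp
qed

lemma key_ineq:
  fixes A B D E a b e :: real
  assumes "(A + B) * D \<ge> A * a + B * E" "D \<le> a + e" "E \<ge> b - e"
    "0 \<le> A" "A \<le> 2" "B \<ge> 1/4" "e \<ge> 0"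
  shows "a \<ge> b - 10 * e"
proof -
  have "(A + B) * D \<le> (A + B) * (a + e)" using assms by (intro mult_left_mono) auto
  moreover have "B * E \<ge> B * (b - e)" using assms by (intro mult_left_mono) auto
  ultimately have "B * (a - b) + (A + 2 * B) * e \<ge> 0" using assms(1) by (simp add: algebra_simps)
  moreover have "(A + 2 * B) * e \<le> 10 * B * e" using assms by (intro mult_right_mono) auto
  ultimately have "B * (a - b + 10 * e) \<ge> 0" by (simp add: algebra_simps)
  then have "a - b + 10 * e \<ge> 0" using assms(6)
    by (simp add: zero_le_mult_iff)
  then show ?thesis by simp
qed

theorem lemma4p4:
  fixes T :: "'a::metric_space \<Rightarrow> 'a" and x :: "nat \<Rightarrow> 'a" and p :: 'a
  assumes "\<forall>v v' :: 'a. dist v v' < pi / 2"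
    and "vicinal T"
    and "asymptotic_center x = {p}"
    and "(\<lambda>n. dist (T (x n)) (x n)) \<longlonglongrightarrow> 0"
  shows "T p = p"
proof -
  define e where "e n = dist (T (x n)) (x n)" for n
  define f where "f n = dist (x n) (T p)" for n
  define g where "g n = dist (x n) p" for n
  have bd: "dist v v' < pi/2" for v v' :: 'a using assms(1) by auto
  have e0: "e \<longlonglongrightarrow> 0" using assms(4) unfolding e_def[abs_def] .
  have "(\<lambda>n. cos (e n)) \<longlonglongrightarrow> cos 0" by (intro tendsto_intros e0)
  then have ev_c: "eventually (\<lambda>n. cos (e n) > 1/2) sequentially"
    by (intro order_tendstoD) auto
  have ineq: "eventually (\<lambda>n. cos (f n) \<ge> cos (g n) - 10 * e n) sequentially"
    using ev_c
  proof eventually_elim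
    case (elim n)
    define Cp where "Cp = cos (dist (T p) p)"
    define c where "c = cos (e n)"
    have Cp0: "0 \<le> Cp" unfolding Cp_def using bd[of "T p" p]
      using zero_le_dist[of "T p" p] pi_gt_zero by (intro cos_ge_zero) linarith+
    have Cp1: "Cp \<le> 1" by (simp add: Cp_def)
    have c1: "c \<le> 1" "c > 1/2" using elim by (auto simp: c_def)
    have V: "(Cp^2 * (1 + c^2) + c^2 * (1 + Cp^2)) * cos (dist (T p) (T (x n)))
       \<ge> Cp^2 * (1 + c^2) * cos (dist (T p) (x n)) + c^2 * (1 + Cp^2) * cos (dist (T (x n)) p)"
      using assms(2) unfolding vicinal_def Let_def Cp_def c_def e_def by blast
    have D: "cos (dist (T p) (T (x n))) \<le> cos (dist (T p) (x n)) + e n"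
    proof -
      have "\<bar>dist (T p) (T (x n)) - dist (T p) (x n)\<bar> \<le> e n"
        unfolding e_def using dist_triangle[of "T p" "T (x n)" "x n"] dist_triangle[of "T p" "x n" "T (x n)"]
        by (simp add: dist_commute abs_le_iff)
      then show ?thesis using cos_lip[of "dist (T p) (T (x n))" "dist (T p) (x n)"]
        by simp
    qed
    have E: "cos (dist (T (x n)) p) \<ge> cos (g n) - e n"
    proof -
      have "\<bar>dist (T (x n)) p - dist (x n) p\<bar> \<le> e n"
        unfolding e_def using dist_triangle[of "T (x n)" p "x n"] dist_triangle[of "x n" p "T (x n)"]
        by (simp add: dist_commute abs_le_iff)
      then show ?thesis using cos_lip[of "dist (T (x n)) p" "dist (x n) p"]
        by (simp add: g_def)
    qed
    have A0: "0 \<le> Cp^2 * (1 + c^2)" by simp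
    have "Cp^2 \<le> 1" using Cp0 Cp1 by (simp add: power_le_one)
    moreover have "c^2 \<le> 1" using c1 by (simp add: power_le_one)
    ultimately have A2: "Cp^2 * (1 + c^2) \<le> 2"
    proof -
      have "Cp^2 * (1 + c^2) \<le> 1 * 2" using \<open>Cp^2 \<le> 1\<close> \<open>c^2 \<le> 1\<close>
        by (intro mult_mono) auto
      then show ?thesis by simp
    qed
    have "c^2 \<ge> (1/2)^2" using c1 by (intro power_mono) auto
    then have B: "c^2 * (1 + Cp^2) \<ge> 1/4"
    proof -
      have "c^2 * 1 \<le> c^2 * (1 + Cp^2)" by (intro mult_left_mono) auto
      then show ?thesis using \<open>c^2 \<ge> (1/2)^2\<close> by (simp add: power2_eq_square)
    qed
    have "cos (dist (T p) (x n)) \<ge> cos (g n) - 10 * e n"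
      by (rule key_ineq[OF V D E A0 A2 B]) (simp add: e_def)
    then show ?case by (simp add: f_def dist_commute)
  qed
  have le: "asymptotic_radius_at x (T p) \<le> asymptotic_radius_at x p"
  proof (rule ccontr)
    assume "\<not> ?thesis"
    then have lt: "limsup (\<lambda>n. ereal (g n)) < limsup (\<lambda>n. ereal (f n))"
      by (simp add: asymptotic_radius_at_def f_def g_def)
    obtain L' where L1: "limsup (\<lambda>n. ereal (g n)) < L'" and L2: "L' < limsup (\<lambda>n. ereal (f n))"
      using lt dense by blast
    obtain M where M1: "L' < M" and M2: "M < limsup (\<lambda>n. ereal (f n))" using L2 dense by blast
    have "limsup (\<lambda>n. ereal (f n)) \<le> ereal (pi/2)"
      by (intro Limsup_bounded always_eventually) (use bd in \<open>auto simp: f_def less_imp_le\<close>)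
    then obtain l m where l: "L' = ereal l" and m: "M = ereal m"
      using L1 M1 M2 by (cases L'; cases M) auto
    have lm: "l < m" using M1 l m by simp
    have evg: "eventually (\<lambda>n. g n < l) sequentially" using Limsup_lessD[OF L1] l by simp
    have l0: "0 < l"
    proof -
      obtain n where "g n < l" using eventually_sequentially evg by auto
      then show "0 < l" using zero_le_dist[of "x n" p] unfolding g_def by linarith
    qed
    have "ereal m < ereal (pi/2)" using M2 m \<open>limsup (\<lambda>n. ereal (f n)) \<le> ereal (pi/2)\<close>
      using order_less_le_trans by blast
    then have mpi: "m < pi" using pi_gt_zero l0 lm by simp
    have "cos m < cos l" using lm l0 mpi cos_mono_less_eq[of m l] by auto
    then have "(\<lambda>n. 10 * e n) \<longlonglongrightarrow> 0" "0 < cos l - cos m"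
      using tendsto_mult_right_zero[OF e0] by auto
    then have eve: "eventually (\<lambda>n. 10 * e n < cos l - cos m) sequentially"
      using order_tendstoD(2) by blast
    have "eventually (\<lambda>n. f n \<le> m) sequentially"
      using evg eve ineq
    proof eventually_elim
      case (elim n)
      have "cos l < cos (g n)" using elim(1) zero_le_dist[of "x n" p] lm l0 mpi
        cos_mono_less_eq[of l "g n"] by (auto simp: g_def)
      then have "cos m < cos (f n)" using elim by linarith
      moreover have "0 \<le> f n" "f n \<le> pi" using zero_le_dist[of "x n" "T p"] bd[of "x n" "T p"]
        using pi_gt_zero unfolding f_def by linarith+
      ultimately show ?case using cos_mono_less_eq[of m "f n"] lm l0 mpi by auto
    qed
    then have "limsup (\<lambda>n. ereal (f n)) \<le> M"
      unfolding m by (intro Limsup_bounded) (auto elim: eventually_mono)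
    then show False using M2 by simp
  qed
  have pin: "p \<in> asymptotic_center x" using assms(3) by auto
  have "asymptotic_radius_at x (T p) = (INF y. asymptotic_radius_at x y)"
    using le pin unfolding asymptotic_center_def
    by (intro order_antisym INF_lower) auto
  then have "T p \<in> asymptotic_center x" unfolding asymptotic_center_def by simp
  then show ?thesis using assms(3) by auto
qed

end
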